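(* Let $A\subseteq\Omega$. If there exists a $\mathcal{P}$-e-process $(E_t)_{t\in\mathbb{N}_0}$ with $\sup_{t\in\mathbb{N}_0}E_t=\infty$ at every point of $A$, then there exists a $\mathcal{P}$-e-process $(E'_t)_{t\in\mathbb{N}_0}$ with $\lim_{t\to\infty}E'_t=\infty$ at every point of $A$; consequently $\mu^*(A)=0$.
   Context: Standing setup: $(\Omega, (\mathcal{F}_t)_{t\in\mathbb{N}_0}, \mathcal{F})$ is a filtered measurable space with $\mathcal{F} = \sigma\big(\bigcup_{t} \mathcal{F}_t\big)$. A stopping time is a map $\tau:\Omega\to\mathbb{N}_0\cup\{\infty\}$ with $\{\tau \le t\}\in\mathcal{F}_t$ for all $t$; $\mathcal{T}$ denotes the set of all stopping times. $\mathcal{P}$ is an arbitrary family of probability measures on $\mathcal{F}$. The inverse-capital measure is defined for every $A\subseteq\Omega$ by $\mu^*(A) = \inf_{\tau\in\mathcal{T}:\, A\subseteq\{\tau<\infty\}} \sup_{\mathbb{P}\in\mathcal{P}} \mathbb{P}(\tau<\infty)$. A $\mathcal{P}$-e-process is a nonnegative (possibly $[0,\infty]$-valued) process $(E_t)_{t\in\mathbb{N}_0}$ adapted to $(\mathcal{F}_t)$ such that $\mathbb{E}_{\mathbb{P}}[E_\tau]\le 1$ for every $\mathbb{P}\in\mathcal{P}$ and every $\tau\in\mathcal{T}$, with the convention $E_\infty=\limsup_{t\to\infty}E_t$. *)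

theory Defs
  imports "HOL-Probability.Probability"
begin

definition filtered_space :: "'a set \<Rightarrow> (nat \<Rightarrow> 'a measure) \<Rightarrow> bool" where
  "filtered_space \<Omega> F \<longleftrightarrow> (\<forall>t. space (F t) = \<Omega>) \<and> (\<forall>s t. s \<le> t \<longrightarrow> sets (F s) \<subseteq> sets (F t))"

definition F_inf :: "'a set \<Rightarrow> (nat \<Rightarrow> 'a measure) \<Rightarrow> 'a measure" where
  "F_inf \<Omega> F = sigma \<Omega> (\<Union>t. sets (F t))"

definition is_stopping_time :: "'a set \<Rightarrow> (nat \<Rightarrow> 'a measure) \<Rightarrow> ('a \<Rightarrow> enat) \<Rightarrow> bool" where
  "is_stopping_time \<Omega> F \<tau> \<longleftrightarrow> (\<forall>t::nat. {\<omega>\<in>\<Omega>. \<tau> \<omega> \<le> enat t} \<in> sets (F t))"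

definition prob_family :: "'a set \<Rightarrow> (nat \<Rightarrow> 'a measure) \<Rightarrow> 'a measure set \<Rightarrow> bool" where
  "prob_family \<Omega> F \<P> \<longleftrightarrow>
     (\<forall>M\<in>\<P>. prob_space M \<and> space M = \<Omega> \<and> sets M = sets (F_inf \<Omega> F))"

definition stopped :: "(nat \<Rightarrow> 'a \<Rightarrow> ennreal) \<Rightarrow> ('a \<Rightarrow> enat) \<Rightarrow> 'a \<Rightarrow> ennreal" where
  "stopped E \<tau> \<omega> = (if \<tau> \<omega> = \<infinity> then limsup (\<lambda>t. E t \<omega>) else E (the_enat (\<tau> \<omega>)) \<omega>)"

definition e_process :: "'a set \<Rightarrow> (nat \<Rightarrow> 'a measure) \<Rightarrow> 'a measure set \<Rightarrow> (nat \<Rightarrow> 'a \<Rightarrow> ennreal) \<Rightarrow> bool" where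
  "e_process \<Omega> F \<P> E \<longleftrightarrow>
     (\<forall>t. E t \<in> borel_measurable (F t)) \<and>
     (\<forall>M\<in>\<P>. \<forall>\<tau>. is_stopping_time \<Omega> F \<tau> \<longrightarrow> (\<integral>\<^sup>+ \<omega>. stopped E \<tau> \<omega> \<partial>M) \<le> 1)"

definition inv_capital :: "'a set \<Rightarrow> (nat \<Rightarrow> 'a measure) \<Rightarrow> 'a measure set \<Rightarrow> 'a set \<Rightarrow> ennreal" where
  "inv_capital \<Omega> F \<P> A =
     (INF \<tau> \<in> {\<tau>. is_stopping_time \<Omega> F \<tau> \<and> A \<subseteq> {\<omega>\<in>\<Omega>. \<tau> \<omega> < \<infinity>}}.
        SUP M \<in> \<P>. emeasure M {\<omega>\<in>\<Omega>. \<tau> \<omega> < \<infinity>})"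

end

theory Submission imports Defs begin

lemma sets_F_sub:
  assumes "filtered_space \<Omega> F" "prob_family \<Omega> F \<P>" "M \<in> \<P>"
  shows "sets (F t) \<subseteq> sets M"
proof -
  have sub: "(\<Union>t. sets (F t)) \<subseteq> Pow \<Omega>"
    using assms(1) sets.sets_into_space unfolding filtered_space_def by fastforce
  have "sets M = sigma_sets \<Omega> (\<Union>t. sets (F t))"
    using assms(2,3) sub unfolding prob_family_def F_inf_def by (simp add: sets_measure_of)
  then show ?thesis by (auto intro: sigma_sets.Basic)
qed

lemma meas_F_M:
  assumes "filtered_space \<Omega> F" "prob_family \<Omega> F \<P>" "M \<in> \<P>"
  shows "f \<in> borel_measurable (F t) \<Longrightarrow> f \<in> borel_measurable M"
proof -
  assume f: "f \<in> borel_measurable (F t)"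
  have "space (F t) = space M" using assms unfolding filtered_space_def prob_family_def by auto
  then show ?thesis using measurable_mono[OF order_refl refl sets_F_sub[OF assms, of t]] f by auto
qed

theorem mainTheorem11:
  fixes \<Omega> :: "'a set" and F :: "nat \<Rightarrow> 'a measure" and \<P> :: "'a measure set" and A :: "'a set"
  assumes "filtered_space \<Omega> F"
    and "prob_family \<Omega> F \<P>"
    and "A \<subseteq> \<Omega>"
    and "\<exists>E. e_process \<Omega> F \<P> E \<and> (\<forall>\<omega>\<in>A. (SUP t. E t \<omega>) = \<infinity>)"
  shows "(\<exists>E'. e_process \<Omega> F \<P> E' \<and> (\<forall>\<omega>\<in>A. ((\<lambda>t. E' t \<omega>) \<longlongrightarrow> \<infinity>) sequentially))
         \<and> inv_capital \<Omega> F \<P> A = 0"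
proof -
  note fs = assms(1) and pf = assms(2)
  obtain E where eE: "e_process \<Omega> F \<P> E" and EA: "\<forall>\<omega>\<in>A. (SUP t. E t \<omega>) = \<infinity>"
    using assms(4) by blast
  have Emeas: "\<And>t. E t \<in> borel_measurable (F t)" using eE unfolding e_process_def by auto
  have Eint: "\<And>M \<tau>. M \<in> \<P> \<Longrightarrow> is_stopping_time \<Omega> F \<tau> \<Longrightarrow> (\<integral>\<^sup>+ \<omega>. stopped E \<tau> \<omega> \<partial>M) \<le> 1"
    using eE unfolding e_process_def by auto
  have spF: "\<And>t. space (F t) = \<Omega>" using fs unfolding filtered_space_def by auto
  have monoF: "\<And>s t. s \<le> t \<Longrightarrow> sets (F s) \<subseteq> sets (F t)" using fs unfolding filtered_space_def by auto
  have spM: "\<And>M. M \<in> \<P> \<Longrightarrow> space M = \<Omega>" using pf unfolding prob_family_def by auto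
  define c :: "nat \<Rightarrow> ennreal" where "c k = ennreal (4 ^ Suc k)" for k
  define S where "S k t = {\<omega>\<in>\<Omega>. \<exists>s\<le>t. c k \<le> E s \<omega>}" for k t
  define T where "T k = {\<omega>\<in>\<Omega>. \<exists>s. c k \<le> E s \<omega>}" for k
  define E' where "E' t \<omega> = (\<Sum>k. ennreal (2 ^ Suc k) * indicator (S k t) \<omega>)" for t \<omega>
  define H where "H \<omega> = (\<Sum>k. ennreal (2 ^ Suc k) * indicator (T k) \<omega>)" for \<omega>
  define \<tau> where "\<tau> k \<omega> = (if \<omega> \<in> T k then enat (LEAST s. c k \<le> E s \<omega>) else \<infinity>)" for k \<omega>
  have lev: "{\<omega>\<in>\<Omega>. c k \<le> E s \<omega>} \<in> sets (F s)" for k s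
    using borel_measurable_le[OF borel_measurable_const Emeas[of s], of "c k"] spF by simp
  have Ssets: "S k t \<in> sets (F t)" for k t
  proof -
    have "S k t = (\<Union>s\<in>{..t}. {\<omega>\<in>\<Omega>. c k \<le> E s \<omega>})" unfolding S_def by auto
    also have "\<dots> \<in> sets (F t)" by (intro sets.finite_UN) (auto intro!: subsetD[OF monoF lev])
    finally show ?thesis .
  qed
  have Tsets: "T k \<in> sets M" if "M \<in> \<P>" for k M
  proof -
    have "T k = (\<Union>t. S k t)" unfolding T_def S_def by auto
    also have "\<dots> \<in> sets M" using Ssets sets_F_sub[OF fs pf that] by (intro sets.countable_UN) auto
    finally show ?thesis .
  qed
  have \<tau>st: "is_stopping_time \<Omega> F (\<tau> k)" for k
  proof -
    have "{\<omega>\<in>\<Omega>. \<tau> k \<omega> \<le> enat t} = S k t" for t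
    proof (intro set_eqI iffI)
      fix \<omega> assume "\<omega> \<in> {\<omega>\<in>\<Omega>. \<tau> k \<omega> \<le> enat t}"
      then have "\<omega> \<in> T k" "(LEAST s. c k \<le> E s \<omega>) \<le> t" "\<omega> \<in> \<Omega>"
        unfolding \<tau>_def by (auto split: if_splits)
      moreover from this have "c k \<le> E (LEAST s. c k \<le> E s \<omega>) \<omega>"
        unfolding T_def by (auto intro: LeastI)
      ultimately show "\<omega> \<in> S k t" unfolding S_def by auto
    next
      fix \<omega> assume "\<omega> \<in> S k t"
      then obtain s where "s \<le> t" "c k \<le> E s \<omega>" "\<omega> \<in> \<Omega>" unfolding S_def by auto
      moreover have "(LEAST s. c k \<le> E s \<omega>) \<le> s" using \<open>c k \<le> E s \<omega>\<close> by (rule Least_le)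
      ultimately show "\<omega> \<in> {\<omega>\<in>\<Omega>. \<tau> k \<omega> \<le> enat t}" unfolding \<tau>_def T_def by auto
    qed
    then show ?thesis unfolding is_stopping_time_def using Ssets by simp
  qed
  have Tbound: "c k * emeasure M (T k) \<le> 1" if M: "M \<in> \<P>" for k M
  proof -
    have "c k * emeasure M (T k) = (\<integral>\<^sup>+ \<omega>. c k * indicator (T k) \<omega> \<partial>M)"
      using Tsets[OF M] by (simp add: nn_integral_cmult_indicator)
    also have "\<dots> \<le> (\<integral>\<^sup>+ \<omega>. stopped E (\<tau> k) \<omega> \<partial>M)"
    proof (rule nn_integral_mono)
      fix \<omega> show "c k * indicator (T k) \<omega> \<le> stopped E (\<tau> k) \<omega>"
      proof (cases "\<omega> \<in> T k")
        case True
        then have "c k \<le> E (LEAST s. c k \<le> E s \<omega>) \<omega>" unfolding T_def by (auto intro: LeastI)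
        then show ?thesis using True unfolding stopped_def \<tau>_def by simp
      qed simp
    qed
    also have "\<dots> \<le> 1" using Eint[OF M \<tau>st] .
    finally show ?thesis .
  qed
  have emT: "emeasure M (T k) \<le> ennreal ((1/4) ^ Suc k)" if M: "M \<in> \<P>" for k M
  proof -
    have "emeasure M (T k) = ennreal ((1/4) ^ Suc k) * (c k * emeasure M (T k))"
      unfolding c_def by (simp add: mult.assoc[symmetric] ennreal_mult[symmetric] power_mult_distrib[symmetric])
    also have "\<dots> \<le> ennreal ((1/4) ^ Suc k) * 1" using Tbound[OF M] by (intro mult_left_mono) auto
    finally show ?thesis by simp
  qed
  have single: "f i \<le> (\<Sum>k. f k)" for f :: "nat \<Rightarrow> ennreal" and i
    using ennreal_suminf_lessD[of f "f i" i] by (metis not_le order_less_irrefl)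
  have E'meas: "E' t \<in> borel_measurable (F t)" for t
  proof -
    have [measurable]: "\<And>k. S k t \<in> sets (F t)" by (rule Ssets)
    show ?thesis unfolding E'_def by measurable
  qed
  have E'H: "E' t \<omega> \<le> H \<omega>" for t \<omega>
    unfolding E'_def H_def
    by (intro suminf_le summableI mult_left_mono) (auto simp: indicator_def S_def T_def)
  have intH: "(\<integral>\<^sup>+ \<omega>. H \<omega> \<partial>M) \<le> 1" if M: "M \<in> \<P>" for M
  proof -
    have [measurable]: "\<And>k. T k \<in> sets M" by (rule Tsets[OF M])
    have "(\<integral>\<^sup>+ \<omega>. H \<omega> \<partial>M) = (\<Sum>k. \<integral>\<^sup>+ \<omega>. ennreal (2 ^ Suc k) * indicator (T k) \<omega> \<partial>M)"
      unfolding H_def by (intro nn_integral_suminf) measurable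
    also have "\<dots> = (\<Sum>k. ennreal (2 ^ Suc k) * emeasure M (T k))"
      using Tsets[OF M] by (simp add: nn_integral_cmult_indicator)
    also have "\<dots> \<le> (\<Sum>k. ennreal ((1/2) ^ Suc k))"
    proof (intro suminf_le summableI)
      fix k
      have "ennreal (2 ^ Suc k) * emeasure M (T k) \<le> ennreal (2 ^ Suc k) * ennreal ((1/4) ^ Suc k)"
        using emT[OF M] by (intro mult_left_mono) auto
      also have "\<dots> = ennreal ((1/2) ^ Suc k)"
        by (simp add: ennreal_mult[symmetric] power_mult_distrib[symmetric])
      finally show "ennreal (2 ^ Suc k) * emeasure M (T k) \<le> ennreal ((1/2) ^ Suc k)" .
    qed
    also have "\<dots> = ennreal 1"
      using power_half_series by (subst suminf_ennreal2) (auto simp: sums_iff)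
    finally show ?thesis by simp
  qed
  have ep: "e_process \<Omega> F \<P> E'"
    unfolding e_process_def
  proof (intro conjI allI ballI impI E'meas)
    fix M \<sigma> assume M: "M \<in> \<P>" and "is_stopping_time \<Omega> F \<sigma>"
    have "(\<integral>\<^sup>+ \<omega>. stopped E' \<sigma> \<omega> \<partial>M) \<le> (\<integral>\<^sup>+ \<omega>. H \<omega> \<partial>M)"
    proof (rule nn_integral_mono)
      fix \<omega> show "stopped E' \<sigma> \<omega> \<le> H \<omega>"
        unfolding stopped_def using E'H by (auto intro!: Limsup_bounded always_eventually)
    qed
    also have "\<dots> \<le> 1" using intH[OF M] .
    finally show "(\<integral>\<^sup>+ \<omega>. stopped E' \<sigma> \<omega> \<partial>M) \<le> 1" .
  qed
  have inT: "\<omega> \<in> T k" if "\<omega> \<in> A" for \<omega> k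
  proof -
    have "(SUP t. E t \<omega>) = top" using EA that by (simp add: infinity_ennreal_def)
    then have "c k < (SUP t. E t \<omega>)" unfolding c_def by (simp only: ennreal_less_top)
    then obtain s where "c k < E s \<omega>" by (auto simp: less_SUP_iff)
    then show ?thesis using that assms(3) unfolding T_def by (auto intro!: exI[of _ s])
  qed
  have lim: "((\<lambda>t. E' t \<omega>) \<longlongrightarrow> \<infinity>) sequentially" if \<omega>: "\<omega> \<in> A" for \<omega>
  proof -
    have inc: "incseq (\<lambda>t. E' t \<omega>)"
      unfolding incseq_def E'_def
      by (intro allI impI suminf_le summableI mult_left_mono) (auto simp: indicator_def S_def intro: le_trans)
    have "(SUP t. E' t \<omega>) = top"
    proof (rule ennreal_SUP_eq_top)
      fix n
      obtain s where s: "c n \<le> E s \<omega>" using inT[OF \<omega>, of n] unfolding T_def by auto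
      have "\<omega> \<in> S n s" using s \<omega> assms(3) unfolding S_def by auto
      have "of_nat n \<le> ennreal (2 ^ Suc n)"
      proof -
        have "n < (2::nat) ^ Suc n" using less_exp[of "Suc n"] by simp
        then have "real n < real ((2::nat) ^ Suc n)" by (simp only: of_nat_less_iff)
        then have "real n \<le> 2 ^ Suc n" by simp
        then show ?thesis by (metis ennreal_leI ennreal_of_nat_eq_real_of_nat)
      qed
      also have "\<dots> = ennreal (2 ^ Suc n) * indicator (S n s) \<omega>" using \<open>\<omega> \<in> S n s\<close> by simp
      also have "\<dots> \<le> E' s \<omega>" unfolding E'_def by (rule single)
      finally show "\<exists>i\<in>UNIV. of_nat n \<le> E' i \<omega>" by auto
    qed
    then show ?thesis using LIMSEQ_SUP[OF inc] by (simp only: infinity_ennreal_def)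
  qed
  have ic: "inv_capital \<Omega> F \<P> A \<le> ennreal ((1/4) ^ Suc k)" for k
  proof -
    have eq: "{\<omega>\<in>\<Omega>. \<tau> k \<omega> < \<infinity>} = T k" unfolding \<tau>_def T_def by auto
    have "\<tau> k \<in> {\<tau>. is_stopping_time \<Omega> F \<tau> \<and> A \<subseteq> {\<omega>\<in>\<Omega>. \<tau> \<omega> < \<infinity>}}"
      using \<tau>st inT eq by auto
    then have "inv_capital \<Omega> F \<P> A \<le> (SUP M \<in> \<P>. emeasure M {\<omega>\<in>\<Omega>. \<tau> k \<omega> < \<infinity>})"
      unfolding inv_capital_def by (rule INF_lower)
    also have "\<dots> \<le> ennreal ((1/4) ^ Suc k)" unfolding eq by (intro SUP_least emT)
    finally show ?thesis .
  qed
  have "inv_capital \<Omega> F \<P> A \<le> 0"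
  proof (rule LIMSEQ_le_const)
    show "(\<lambda>k. ennreal ((1/4) ^ Suc k)) \<longlonglongrightarrow> 0"
      using tendsto_ennrealI[OF LIMSEQ_Suc[OF LIMSEQ_power_zero[of "1/4::real"]]] by simp
    show "\<exists>N. \<forall>n\<ge>N. inv_capital \<Omega> F \<P> A \<le> ennreal ((1/4) ^ Suc n)" using ic by auto
  qed
  then show ?thesis using ep lim by auto
qed
end
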